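(* Let $s$ be a Sturmian word and $t\in\{a,b\}^{\omega}$ with $R(t)=s$, where $R$ is the morphism $R(a)=a$, $R(b)=ba$. Suppose that either (1) the first letter of $t$ is $b$, or (2) $s$ admits a factorization $s=U_1U_2\cdots U_n\cdots$ where each $U_i$ is a non-empty prefix of $s$ ending in the letter $a$ and $r_s(U_i)=r_s(U_j)$ for all $i,j\ge1$. Then $t$ is a Sturmian word.
   Context: A Sturmian word is an infinite word $s\in\{a,b\}^{\omega}$ that is aperiodic (not ultimately periodic) and balanced: for all factors $u,v$ of $s$ with $|u|=|v|$ one has $||u|_x-|v|_x|\le 1$ for $x\in\{a,b\}$, where $|u|_x$ is the number of occurrences of $x$ in $u$. A non-empty factor $w$ of $s$ is rich in the letter $z\in\{a,b\}$ if there is a factor $v$ of $s$ with $|v|=|w|$ and $|w|_z>|v|_z$; every non-empty factor of a Sturmian word is rich in exactly one letter, and $r_s(w)\in\{a,b\}$ denotes that letter. *)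

theory Defs
  imports Main
begin

datatype letter = a | b

type_synonym iword = "nat \<Rightarrow> letter"

definition cnt :: "letter list \<Rightarrow> letter \<Rightarrow> nat" where
  "cnt w x = length (filter (\<lambda>y. y = x) w)"

definition factor :: "letter list \<Rightarrow> iword \<Rightarrow> bool" where
  "factor w s \<longleftrightarrow> (\<exists>i. w = map s [i..<i + length w])"

definition ult_periodic :: "iword \<Rightarrow> bool" where
  "ult_periodic s \<longleftrightarrow> (\<exists>p>0. \<exists>N. \<forall>n\<ge>N. s (n + p) = s n)"

definition balanced :: "iword \<Rightarrow> bool" where
  "balanced s \<longleftrightarrow> (\<forall>u v x. factor u s \<longrightarrow> factor v s \<longrightarrow> length u = length v \<longrightarrow>
      \<bar>int (cnt u x) - int (cnt v x)\<bar> \<le> 1)"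

definition sturmian :: "iword \<Rightarrow> bool" where
  "sturmian s \<longleftrightarrow> \<not> ult_periodic s \<and> balanced s"

definition rich_in :: "iword \<Rightarrow> letter list \<Rightarrow> letter \<Rightarrow> bool" where
  "rich_in s w z \<longleftrightarrow> w \<noteq> [] \<and> factor w s \<and>
      (\<exists>v. factor v s \<and> length v = length w \<and> cnt w z > cnt v z)"

text \<open>r_s(w): the (unique, for Sturmian s) letter in which w is rich.\<close>
definition rich_letter :: "iword \<Rightarrow> letter list \<Rightarrow> letter" where
  "rich_letter s w = (THE z. rich_in s w z)"

fun R :: "letter \<Rightarrow> letter list" where
  "R a = [a]"
| "R b = [b, a]"

definition pref :: "iword \<Rightarrow> nat \<Rightarrow> letter list" where
  "pref s n = map s [0..<n]"

text \<open>R(t) = s for infinite words: the image of every prefix of t is a prefix of s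
  (R is non-erasing, so this determines s).\<close>
definition R_image :: "iword \<Rightarrow> iword \<Rightarrow> bool" where
  "R_image t s \<longleftrightarrow> (\<forall>n. let w = concat (map R (pref t n)) in pref s (length w) = w)"

definition factorization :: "iword \<Rightarrow> (nat \<Rightarrow> letter list) \<Rightarrow> bool" where
  "factorization s U \<longleftrightarrow> (\<forall>i. U i \<noteq> []) \<and>
     (\<forall>n. let w = concat (map U [0..<n]) in pref s (length w) = w)"

end

theory Submission
  imports Defs
begin
definition Cn :: "iword \<Rightarrow> nat \<Rightarrow> nat \<Rightarrow> nat" where
  "Cn s p L = cnt (map s [p..<p+L]) b"

lemma cnt_append: "cnt (u@v) x = cnt u x + cnt v x"
  by (simp add: cnt_def)

lemma Cn_add: "Cn s p (L1+L2) = Cn s p L1 + Cn s (p+L1) L2"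
  unfolding Cn_def
  using upt_add_eq_append[of p "p+L1" L2]
  by (simp add: cnt_append add.assoc)

lemma Cn_0[simp]: "Cn s p 0 = 0" by (simp add: Cn_def cnt_def)
lemma Cn_1: "Cn s p 1 = (if s p = b then 1 else 0)" by (simp add: Cn_def cnt_def)
lemma Cn_Suc0[simp]: "Cn s p (Suc 0) = (if s p = b then 1 else 0)" by (simp add: Cn_def cnt_def)

lemma Cn_Suc: "Cn s p (Suc L) = (if s p = b then 1 else 0) + Cn s (Suc p) L"
  using Cn_add[of s p 1 L] by (simp add: Cn_1)

lemma Cn_le: "Cn s p L \<le> L"
  unfolding Cn_def cnt_def using length_filter_le[of "\<lambda>y. y = b" "map s [p..<p+L]"] by simp

lemma Cn_bal: "balanced s \<Longrightarrow> Cn s p L \<le> Cn s q L + 1"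
  unfolding balanced_def Cn_def
  apply (drule spec[of _ "map s [p..<p+L]"], drule spec[of _ "map s [q..<q+L]"], drule spec[of _ b])
  apply (auto simp: factor_def)
  done

lemma factor_Cn: "factor w s \<Longrightarrow> \<exists>i. cnt w b = Cn s i (length w) \<and> w = map s [i..<i+length w]"
  unfolding factor_def Cn_def by metis

lemma cnt_ab: "cnt w a + cnt w b = length w"
proof (induction w)
  case (Cons x w) then show ?case by (cases x) (auto simp: cnt_def)
qed (simp add: cnt_def)

definition pos :: "iword \<Rightarrow> nat \<Rightarrow> nat" where
  "pos t n = length (concat (map R (pref t n)))"

lemma pref_Suc: "pref t (Suc n) = pref t n @ [t n]" by (simp add: pref_def)
lemma pos_0[simp]: "pos t 0 = 0" by (simp add: pos_def pref_def)
lemma pos_Suc: "pos t (Suc n) = pos t n + length (R (t n))"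
  by (simp add: pos_def pref_Suc)
lemma lenR: "length (R x) = (if x = b then 2 else 1)" by (cases x) auto

lemma block:
  assumes "R_image t s" "r < length (R (t n))"
  shows "s (pos t n + r) = R (t n) ! r"
proof -
  have "pref s (pos t (Suc n)) = concat (map R (pref t n)) @ R (t n)"
  proof -
    have "pref s (pos t (Suc n)) = concat (map R (pref t (Suc n)))"
      using assms(1) unfolding R_image_def Let_def pos_def by blast
    thus ?thesis by (simp add: pref_Suc)
  qed
  hence "pref s (pos t (Suc n)) ! (pos t n + r) = (concat (map R (pref t n)) @ R (t n)) ! (pos t n + r)"
    by simp
  thus ?thesis using assms(2) by (simp add: pref_def pos_Suc nth_append pos_def)
qed

lemma blocks_cover: "\<exists>n r. r < length (R (t n)) \<and> q = pos t n + r"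
proof (induction q)
  case 0 then show ?case by (rule exI[of _ 0], rule exI[of _ 0]) (simp add: lenR)
next
  case (Suc q)
  then obtain n r where nr: "r < length (R (t n))" "q = pos t n + r" by blast
  show ?case
  proof (cases "Suc r < length (R (t n))")
    case True then show ?thesis using nr by (intro exI[of _ n] exI[of _ "Suc r"]) auto
  next
    case False
    hence "Suc q = pos t (Suc n)" using nr by (simp add: pos_Suc)
    then show ?thesis by (intro exI[of _ "Suc n"] exI[of _ 0]) (simp add: lenR)
  qed
qed

lemma isolated: assumes "R_image t s" "s q = b" shows "s (Suc q) = a"
proof -
  obtain n r where nr: "r < length (R (t n))" "q = pos t n + r" using blocks_cover by blast
  have "R (t n) ! r = b" using block[OF assms(1) nr(1)] nr assms(2) by simp
  hence "t n = b \<and> r = 0" using nr(1) by (cases "t n"; cases r) auto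
  thus ?thesis using block[OF assms(1), of 1 n] nr by simp
qed

lemma Cn_two: "R_image t s \<Longrightarrow> Cn s p 2 \<le> 1"
  using isolated[of t s p] by (simp add: Cn_Suc numeral_2_eq_2 split: if_splits)

lemma Cn_iso: assumes "R_image t s" shows "Cn s p d \<le> (d+1) div 2"
proof (induction d arbitrary: p rule: less_induct)
  case (less d)
  show ?case
  proof (cases "d < 2")
    case True then show ?thesis using Cn_le[of s p d] by (cases d) auto
  next
    case False
    then obtain e where e: "d = e + 2" by (metis add.commute le_Suc_ex not_less)
    have "Cn s p d = Cn s p e + Cn s (p+e) 2" unfolding e by (rule Cn_add)
    also have "\<dots> \<le> (e+1) div 2 + 1" using less[of e p] Cn_two[OF assms, of "p+e"] e by simp
    finally show ?thesis using e by simp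
  qed
qed

lemma pos_add: "pos t (n+m) = pos t n + m + Cn t n m"
proof (induction m)
  case 0 then show ?case by simp
next
  case (Suc m)
  have "Cn t n (Suc m) = Cn t n m + Cn t (n+m) 1" using Cn_add[of t n m 1] by simp
  then show ?case using Suc by (simp add: pos_Suc lenR Cn_1)
qed

lemma pos_ge: "pos t n \<ge> n" using pos_add[of t 0 n] by simp

lemma Cn_block: "R_image t s \<Longrightarrow> Cn s (pos t k) (length (R (t k))) = (if t k = b then 1 else 0)"
  using block[of t s 0 k] block[of t s 1 k]
  by (cases "t k") (auto simp: Cn_Suc numeral_2_eq_2)

lemma Cn_pos: assumes "R_image t s" shows "Cn s (pos t n) (m + Cn t n m) = Cn t n m"
proof (induction m)
  case 0 then show ?case by simp
next
  case (Suc m)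
  have c: "Cn t n (Suc m) = Cn t n m + Cn t (n+m) 1" using Cn_add[of t n m 1] by simp
  have "Suc m + Cn t n (Suc m) = (m + Cn t n m) + length (R (t (n+m)))"
    by (simp add: c Cn_1 lenR)
  hence "Cn s (pos t n) (Suc m + Cn t n (Suc m)) = Cn s (pos t n) (m + Cn t n m) + Cn s (pos t (n+m)) (length (R (t (n+m))))"
    using Cn_add[of s "pos t n" "m + Cn t n m" "length (R (t (n+m)))"] pos_add[of t n m] by (simp only: add.assoc)
  hence "Cn s (pos t n) (Suc m + Cn t n (Suc m)) = Cn t n m + Cn s (pos t (n+m)) (length (R (t (n+m))))"
    using Suc by simp
  then show ?case using Cn_block[OF assms] c by (simp add: Cn_1)
qed

lemma s_before: assumes "R_image t s" "i \<ge> 1" shows "s (pos t i - 1) = a"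
proof -
  obtain i' where i: "i = Suc i'" using assms(2) by (cases i) auto
  have "pos t i - 1 = pos t i' + (length (R (t i')) - 1)" by (simp add: i pos_Suc lenR)
  moreover have "s (pos t i' + (length (R (t i')) - 1)) = a"
    using block[OF assms(1), of "length (R (t i')) - 1" i'] by (cases "t i'") auto
  ultimately show ?thesis by simp
qed

lemma LemW:
  assumes R: "R_image t s" and h: "Cn t j n \<ge> Cn t i n + 2"
  shows "Cn s (pos t j) (n + Cn t i n + 1) \<ge> Cn t i n + 2"
proof -
  define k where "k = Cn t i n"
  define k' where "k' = Cn t j n"
  have kk: "k' \<ge> k + 2" using h by (simp add: k_def k'_def)
  have n1: "n \<ge> 1" using kk Cn_le[of t j n] by (simp add: k'_def)
  have full: "Cn s (pos t j) (n + k') = k'" using Cn_pos[OF R, of j n] by (simp add: k'_def)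
  have pj: "pos t (j+n) = pos t j + n + k'" using pos_add[of t j n] by (simp add: k'_def)
  have la: "s (pos t (j+n) - 1) = a" using s_before[OF R] n1 by simp
  have "Cn s (pos t j) (n + k') = Cn s (pos t j) (n+k'-1) + Cn s (pos t j + (n+k'-1)) 1"
    using Cn_add[of s "pos t j" "n+k'-1" 1] n1 by simp
  moreover have "pos t j + (n+k'-1) = pos t (j+n) - 1" using pj n1 by simp
  ultimately have c1: "Cn s (pos t j) (n+k'-1) = k'" using full la by (simp add: Cn_1)
  have "Cn s (pos t j) (n+k'-1) = Cn s (pos t j) (n+k+1) + Cn s (pos t j + (n+k+1)) (k'-k-2)"
  proof -
    have "n+k'-1 = (n+k+1)+(k'-k-2)" using kk n1 by simp
    thus ?thesis using Cn_add[of s "pos t j" "n+k+1" "k'-k-2"] by simp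
  qed
  moreover have "Cn s (pos t j + (n+k+1)) (k'-k-2) \<le> (k'-k-1) div 2"
    using Cn_iso[OF R, of "pos t j + (n+k+1)" "k'-k-2"] kk by simp
  ultimately have "k' \<le> Cn s (pos t j) (n+k+1) + (k'-k-1) div 2" using c1 by simp
  hence "Cn s (pos t j) (n+k+1) \<ge> k+2" using kk by presburger
  thus ?thesis by (simp add: k_def)
qed

lemma KL:
  assumes S: "sturmian s" and R: "R_image t s" and i: "i \<ge> 1"
  shows "Cn t j n \<le> Cn t i n + 1"
proof (rule ccontr)
  assume "\<not> ?thesis"
  hence h: "Cn t j n \<ge> Cn t i n + 2" by simp
  define k where "k = Cn t i n"
  have bal: "balanced s" using S by (simp add: sturmian_def)
  have p1: "pos t i \<ge> 1" using pos_ge[of i t] i by simp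
  have "Cn s (pos t i - 1) (Suc (n + k)) = Cn s (pos t i) (n+k)"
    using Cn_Suc[of s "pos t i - 1" "n+k"] s_before[OF R i] p1 by simp
  also have "\<dots> = k" using Cn_pos[OF R, of i n] by (simp add: k_def)
  finally have w1: "Cn s (pos t i - 1) (n + k + 1) = k" by simp
  have "Cn s (pos t j) (n + k + 1) \<ge> k + 2" using LemW[OF R h] by (simp add: k_def)
  moreover have "Cn s (pos t j) (n + k + 1) \<le> Cn s (pos t i - 1) (n + k + 1) + 1" by (rule Cn_bal[OF bal])
  ultimately show False using w1 by simp
qed

lemma cnt_a: "cnt w a = length w - cnt w b" using cnt_ab[of w] by simp

lemma rich_pref:
  assumes S: "sturmian s" and l: "l \<ge> 1"
  shows "rich_in s (pref s l) (rich_letter s (pref s l))"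
proof -
  have bal: "balanced s" using S by (simp add: sturmian_def)
  have fw: "factor (pref s l) s" unfolding factor_def pref_def by (rule exI[of _ 0]) simp
  have ne: "pref s l \<noteq> []" using l by (simp add: pref_def)
  have cw: "cnt (pref s l) b = Cn s 0 l" by (simp add: pref_def Cn_def)
  have lw: "length (pref s l) = l" by (simp add: pref_def)
  have "\<exists>q. Cn s q l \<noteq> Cn s 0 l"
  proof (rule ccontr)
    assume "\<not> ?thesis"
    hence all: "\<And>q. Cn s q l = Cn s 0 l" by auto
    have "\<And>q. s (q + l) = s q"
    proof -
      fix q
      have "Cn s q (Suc l) = Cn s q l + Cn s (q + l) 1" using Cn_add[of s q l 1] by simp
      moreover have "Cn s q (Suc l) = (if s q = b then 1 else 0) + Cn s (Suc q) l" by (rule Cn_Suc)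
      ultimately have "(if s (q+l) = b then 1 else 0) = (if s q = b then 1 else (0::nat))"
        using all[of q] all[of "Suc q"] by (simp add: Cn_1)
      thus "s (q + l) = s q" by (cases "s q"; cases "s (q+l)") (auto split: if_splits)
    qed
    hence "ult_periodic s" unfolding ult_periodic_def using l
      by (intro exI[of _ l] conjI exI[of _ 0]) auto
    thus False using S by (simp add: sturmian_def)
  qed
  then obtain q where q: "Cn s q l \<noteq> Cn s 0 l" by blast
  have fv: "factor (map s [q..<q+l]) s" unfolding factor_def by auto
  have cv: "cnt (map s [q..<q+l]) b = Cn s q l" by (simp add: Cn_def)
  have le: "Cn s q l \<le> l" "Cn s 0 l \<le> l" using Cn_le by auto
  have ex: "rich_in s (pref s l) a \<or> rich_in s (pref s l) b"
  proof (cases "Cn s q l > Cn s 0 l")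
    case True
    hence "rich_in s (pref s l) a" unfolding rich_in_def using fw ne fv lw cw cv le
      by (intro conjI exI[of _ "map s [q..<q+l]"]) (auto simp: cnt_a)
    thus ?thesis by simp
  next
    case False
    hence "rich_in s (pref s l) b" unfolding rich_in_def using fw ne fv lw cw cv q
      by (intro conjI exI[of _ "map s [q..<q+l]"]) auto
    thus ?thesis by simp
  qed
  have notboth: "\<not> (rich_in s (pref s l) a \<and> rich_in s (pref s l) b)"
  proof
    assume "rich_in s (pref s l) a \<and> rich_in s (pref s l) b"
    then obtain v1 v2 where v1: "factor v1 s" "length v1 = l" "cnt (pref s l) a > cnt v1 a"
      and v2: "factor v2 s" "length v2 = l" "cnt (pref s l) b > cnt v2 b"
      unfolding rich_in_def lw by blast
    have "cnt v1 b > cnt (pref s l) b" using v1 cnt_ab[of v1] cnt_ab[of "pref s l"] lw by simp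
    hence "cnt v1 b \<ge> cnt v2 b + 2" using v2 by simp
    moreover have "\<bar>int (cnt v1 b) - int (cnt v2 b)\<bar> \<le> 1"
      using bal v1 v2 unfolding balanced_def by auto
    ultimately show False by simp
  qed
  show ?thesis
  proof (cases "rich_in s (pref s l) a")
    case True
    have "rich_letter s (pref s l) = a" unfolding rich_letter_def
    proof (rule the_equality)
      fix x assume "rich_in s (pref s l) x" thus "x = a" using notboth True by (cases x) auto
    qed (rule True)
    then show ?thesis using True by simp
  next
    case False
    hence T: "rich_in s (pref s l) b" using ex by simp
    have "rich_letter s (pref s l) = b" unfolding rich_letter_def
    proof (rule the_equality)
      fix x assume "rich_in s (pref s l) x" thus "x = b" using False by (cases x) auto
    qed (rule T)
    then show ?thesis using T by simp
  qed
qed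

lemma rich_a_min: "balanced s \<Longrightarrow> rich_in s (pref s l) a \<Longrightarrow> Cn s 0 l \<le> Cn s p l"
  unfolding rich_in_def
proof (elim conjE exE)
  fix v assume bal: "balanced s" and v: "factor v s" "length v = length (pref s l)"
    "cnt v a < cnt (pref s l) a"
  obtain q where q: "cnt v b = Cn s q l" using factor_Cn[OF v(1)] v(2) by (auto simp: pref_def)
  have "Cn s 0 l = cnt (pref s l) b" by (simp add: pref_def Cn_def)
  hence "Cn s 0 l < Cn s q l" using v(2,3) cnt_ab[of v] cnt_ab[of "pref s l"] q by simp
  moreover have "Cn s q l \<le> Cn s p l + 1" by (rule Cn_bal[OF bal])
  ultimately show ?thesis by simp
qed

lemma rich_b_max: "balanced s \<Longrightarrow> rich_in s (pref s l) b \<Longrightarrow> Cn s p l \<le> Cn s 0 l"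
  unfolding rich_in_def
proof (elim conjE exE)
  fix v assume bal: "balanced s" and v: "factor v s" "length v = length (pref s l)"
    "cnt v b < cnt (pref s l) b"
  obtain q where q: "cnt v b = Cn s q l" using factor_Cn[OF v(1)] v(2) by (auto simp: pref_def)
  have "Cn s 0 l = cnt (pref s l) b" by (simp add: pref_def Cn_def)
  hence "Cn s q l < Cn s 0 l" using v(3) q by simp
  moreover have "Cn s p l \<le> Cn s q l + 1" by (rule Cn_bal[OF bal])
  ultimately show ?thesis by simp
qed

lemma case2:
  assumes S: "sturmian s" and R: "R_image t s" and fac: "factorization s U"
    and pr: "\<forall>i. U i \<noteq> [] \<and> pref s (length (U i)) = U i \<and> last (U i) = a"
    and rl: "\<forall>i j. rich_letter s (U i) = rich_letter s (U j)"
  shows "Cn t j n \<le> Cn t 0 n + 1"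
proof (rule ccontr)
  assume "\<not> ?thesis"
  hence h: "Cn t j n \<ge> Cn t 0 n + 2" by simp
  have bal: "balanced s" using S by (simp add: sturmian_def)
  define l where "l i = length (U i)" for i
  define N where "N j = length (concat (map U [0..<j]))" for j
  have pfx: "pref s (N j) = concat (map U [0..<j])" for j
    using fac unfolding factorization_def Let_def N_def by blast
  have NSuc: "N (Suc j) = N j + l j" for j by (simp add: N_def l_def)
  have Ul: "U i = pref s (l i)" for i using pr by (simp add: l_def)
  have l1: "l i \<ge> 1" for i using pr by (simp add: l_def Suc_le_eq)
  have shift: "s (N j + r) = s r" if "r < l j" for j r
  proof -
    have "pref s (N (Suc j)) = concat (map U [0..<j]) @ U j" using pfx[of "Suc j"] by simp
    hence "pref s (N (Suc j)) ! (N j + r) = (concat (map U [0..<j]) @ U j) ! (N j + r)" by simp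
    moreover have "(concat (map U [0..<j]) @ U j) ! (N j + r) = U j ! r"
      by (simp add: nth_append N_def)
    moreover have "U j ! r = s r" using Ul[of j] that by (simp add: pref_def)
    ultimately show ?thesis using that by (simp add: pref_def NSuc)
  qed
  define k where "k = Cn t 0 n"
  define m where "m = n + k"
  have P: "Cn s 0 m = k" using Cn_pos[OF R, of 0 n] by (simp add: k_def m_def)
  have W: "Cn s (pos t j) (m+1) \<ge> k+2" using LemW[OF R h] by (simp add: k_def m_def)
  have allw: "Cn s p (m+1) \<ge> k+1" for p using W Cn_bal[OF bal, of "pos t j" "m+1" p] by simp
  have last0: "s (l 0 - 1) = a"
  proof -
    have "last (U 0) = a" using pr by simp
    hence "last (pref s (l 0)) = a" using Ul[of 0] by simp
    thus ?thesis using l1[of 0] by (simp add: pref_def last_conv_nth)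
  qed
  have "Cn s (l 0 - 1) (Suc m) = (if s (l 0 - 1) = b then 1 else 0) + Cn s (Suc (l 0 - 1)) m"
    by (rule Cn_Suc)
  hence W1: "Cn s (l 0) m \<ge> k+1" using allw[of "l 0 - 1"] last0 l1[of 0] by simp
  define z where "z = rich_letter s (U 0)"
  have rz: "rich_in s (U i) z" for i
    using rich_pref[OF S l1[of i]] rl Ul[of i] by (metis z_def)
  show False
  proof (cases z)
    case b
    have mx: "Cn s m (l 0) \<le> Cn s 0 (l 0)" using rich_b_max[OF bal] rz[of 0] Ul[of 0] b by simp
    have "Cn s 0 (l 0 + m) = Cn s 0 (l 0) + Cn s (l 0) m" using Cn_add[of s 0 "l 0" m] by simp
    moreover have "Cn s 0 (m + l 0) = Cn s 0 m + Cn s m (l 0)" using Cn_add[of s 0 m "l 0"] by simp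
    ultimately have "Cn s (l 0) m \<le> k" using mx P by (simp add: add.commute)
    then show False using W1 by simp
  next
    case a
    have amin: "Cn s 0 (l i) \<le> Cn s p (l i)" for i p
      using rich_a_min[OF bal] rz[of i] Ul[of i] a by simp
    have eqw: "Cn s (N j) L = Cn s 0 L" if "L \<le> l j" for j L
    proof -
      have "map s [N j..<N j+L] = map s [0..<L]"
        by (rule nth_equalityI) (use that in \<open>auto simp: shift\<close>)
      thus ?thesis by (simp add: Cn_def)
    qed
    have D: "Cn s (N j) L \<le> Cn s 0 L" for j L
    proof (induction L arbitrary: j rule: less_induct)
      case (less L)
      show ?case
      proof (cases "L \<le> l j")
        case True then show ?thesis using eqw by simp
      next
        case False
        define L' where "L' = L - l j"
        have L: "L = l j + L'" using False by (simp add: L'_def)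
        have "Cn s (N j) L = Cn s (N j) (l j) + Cn s (N (Suc j)) L'"
          unfolding L using Cn_add[of s "N j" "l j" L'] by (simp add: NSuc)
        also have "\<dots> \<le> Cn s 0 (l j) + Cn s 0 L'"
          using eqw[of "l j" j] less[of L' "Suc j"] L l1[of j] by simp
        also have "\<dots> \<le> Cn s L' (l j) + Cn s 0 L'" using amin[of j L'] by simp
        also have "\<dots> = Cn s 0 L" unfolding L using Cn_add[of s 0 L' "l j"] by (simp add: add.commute)
        finally show ?thesis .
      qed
    qed
    have "N 1 = l 0" by (simp add: N_def l_def)
    hence "Cn s (l 0) m \<le> k" using D[of 1 m] P by simp
    then show False using W1 by simp
  qed
qed

lemma pos_mono: "n \<le> n' \<Longrightarrow> pos t n \<le> pos t n'"
  using pos_add[of t n "n' - n"] by simp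

lemma aper:
  assumes R: "R_image t s" and np: "\<not> ult_periodic s"
  shows "\<not> ult_periodic t"
proof
  assume "ult_periodic t"
  then obtain p N where p: "p > 0" and per: "\<forall>n\<ge>N. t (n + p) = t n"
    unfolding ult_periodic_def by blast
  define P where "P = pos t (N+p) - pos t N"
  have P0: "P > 0" using pos_add[of t N p] p by (simp add: P_def)
  have pp: "pos t (n+p) = pos t n + P" if "n \<ge> N" for n
    using that
  proof (induction n rule: dec_induct)
    case base then show ?case using pos_mono[of N "N+p" t] by (simp add: P_def)
  next
    case (step n)
    have "pos t (Suc n + p) = pos t (n+p) + length (R (t (n+p)))" by (simp add: pos_Suc)
    then show ?case using step per by (simp add: pos_Suc)
  qed
  have "s (q + P) = s q" if "q \<ge> pos t N" for q
  proof -
    obtain n r where nr: "r < length (R (t n))" "q = pos t n + r" using blocks_cover by blast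
    have nN: "n \<ge> N"
    proof (rule ccontr)
      assume "\<not> n \<ge> N"
      hence "pos t (Suc n) \<le> pos t N" using pos_mono[of "Suc n" N t] by simp
      thus False using nr that by (simp add: pos_Suc)
    qed
    have tn: "t (n+p) = t n" using per nN by simp
    have "s (q + P) = s (pos t (n+p) + r)" using pp[OF nN] nr by (simp add: ac_simps)
    also have "\<dots> = R (t (n+p)) ! r" using block[OF R] nr tn by simp
    also have "\<dots> = s q" using block[OF R nr(1)] nr tn by simp
    finally show ?thesis .
  qed
  hence "ult_periodic s" unfolding ult_periodic_def using P0
    by (intro exI[of _ P] conjI exI[of _ "pos t N"]) auto
  thus False using np by simp
qed

theorem mainTheorem3:
  fixes s t :: iword
  assumes "sturmian s"
    and "R_image t s"
    and "t 0 = b \<or>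
         (\<exists>U. factorization s U \<and>
              (\<forall>i. U i \<noteq> [] \<and> pref s (length (U i)) = U i \<and> last (U i) = a) \<and>
              (\<forall>i j. rich_letter s (U i) = rich_letter s (U j)))"
  shows "sturmian t"
proof -
  have H: "Cn t j n \<le> Cn t i n + 1" for i j n
  proof (cases "i \<ge> 1")
    case True then show ?thesis using KL[OF assms(1,2)] by blast
  next
    case False
    hence i0: "i = 0" by simp
    from assms(3) show ?thesis
    proof
      assume t0: "t 0 = b"
      show ?thesis
      proof (cases n)
        case 0 then show ?thesis by simp
      next
        case (Suc n')
        have "Cn t (Suc j) n' \<le> Cn t 1 n' + 1" using KL[OF assms(1,2)] by simp
        moreover have "Cn t j (Suc n') = (if t j = b then 1 else 0) + Cn t (Suc j) n'" by (rule Cn_Suc)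
        moreover have "Cn t 0 (Suc n') = 1 + Cn t 1 n'" using Cn_Suc[of t 0 n'] t0 by simp
        ultimately show ?thesis using i0 Suc by simp
      qed
    next
      assume "\<exists>U. factorization s U \<and>
              (\<forall>i. U i \<noteq> [] \<and> pref s (length (U i)) = U i \<and> last (U i) = a) \<and>
              (\<forall>i j. rich_letter s (U i) = rich_letter s (U j))"
      then obtain U where "factorization s U"
        "\<forall>i. U i \<noteq> [] \<and> pref s (length (U i)) = U i \<and> last (U i) = a"
        "\<forall>i j. rich_letter s (U i) = rich_letter s (U j)" by blast
      from case2[OF assms(1,2) this] i0 show ?thesis by simp
    qed
  qed
  have "balanced t"
    unfolding balanced_def
  proof (intro allI impI)
    fix u v x assume u: "factor u t" and v: "factor v t" and l: "length u = length v"
    obtain i where i: "cnt u b = Cn t i (length u)" using factor_Cn[OF u] by blast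
    obtain j where j: "cnt v b = Cn t j (length u)" using factor_Cn[OF v] l by auto
    have h1: "cnt u b \<le> cnt v b + 1" using H[of i "length u" j] i j by simp
    have h2: "cnt v b \<le> cnt u b + 1" using H[of j "length u" i] i j by simp
    show "\<bar>int (cnt u x) - int (cnt v x)\<bar> \<le> 1"
    proof (cases x)
      case a
      have "cnt u a + cnt u b = length u" "cnt v a + cnt v b = length u" using cnt_ab l by auto
      then show ?thesis using h1 h2 unfolding a by linarith
    next
      case b then show ?thesis using h1 h2 unfolding b by linarith
    qed
  qed
  moreover have "\<not> ult_periodic t" using aper[OF assms(2)] assms(1) by (simp add: sturmian_def)
  ultimately show ?thesis by (simp add: sturmian_def)
qed

end
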